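(* Let $k\ge1$, $\beta\ge1$ integers, $0\le\ell\le k-1$, and consider weighted $k$-server on a uniform metric space $S$ with server weights $1,\beta,\ldots,\beta^{k-1}$. Define $c_0=0$ and $c_\ell=\beta^{\ell-1}+\beta\cdot(\lceil n_{\ell-1}/2\rceil+1)\cdot c_{\ell-1}$ for $\ell>0$. Let $P\subseteq S$ with $|P|=n_\ell$, and suppose a server configuration is given in which at least one server other than the $\ell$ lightest servers (those of weights $1,\ldots,\beta^{\ell-1}$) occupies a point of $P$. Then for every request sequence that can be generated by a call $\mathsf{strategy}(\ell,P)$, there is a way to serve it starting from this configuration with total cost at most $c_\ell$.
   Context: The sequence $n_0,n_1,\ldots$ is defined by $n_0=1$ and $n_i=\left(\lceil n_{i-1}/2\rceil+1\right)\left(\lfloor n_{i-1}/2\rfloor+1\right)$ for $i>0$. Weighted $k$-server on a uniform metric: $k$ servers with given weights sit at points; each requested point must be occupied by a server after serving it; moving a server of weight $w$ to a different point costs $w$. For every $\ell\ge1$ and every set $P$ with $|P|=n_\ell$, fix a set system $\mathcal{Q}(\ell,P)\subseteq 2^P$ consisting of $\lceil n_{\ell-1}/2\rceil+1$ sets each of size $n_{\ell-1}$, such that every $p\in P$ is missed by some set of $\mathcal{Q}(\ell,P)$, and for every $p\in P$ there is $q\in P$ with every set of $\mathcal{Q}(\ell,P)$ containing $p$ or $q$ (such systems exist). The procedure $\mathsf{strategy}(\ell,P)$ (with $|P|=n_\ell$) is: if $\ell=0$, request the unique point of $P$; if $\ell>0$, repeat $\beta\cdot(\lceil n_{\ell-1}/2\rceil+1)$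 times: pick $P'$ uniformly at random from $\mathcal{Q}(\ell,P)$, independently of all previous random choices, and run $\mathsf{strategy}(\ell-1,P')$. *)

theory Defs
  imports Main
begin

text \<open>The sequence n_i: n_0 = 1, n_i = (ceil(n_{i-1}/2)+1)(floor(n_{i-1}/2)+1).
  For naturals, ceil(m/2) = (m+1) div 2 and floor(m/2) = m div 2.\<close>
fun nseq :: "nat \<Rightarrow> nat" where
  "nseq 0 = 1"
| "nseq (Suc i) = ((nseq i + 1) div 2 + 1) * (nseq i div 2 + 1)"

fun cseq :: "nat \<Rightarrow> nat \<Rightarrow> nat" where
  "cseq \<beta> 0 = 0"
| "cseq \<beta> (Suc l) = \<beta> ^ l + \<beta> * ((nseq l + 1) div 2 + 1) * cseq \<beta> l"

text \<open>A configuration assigns to each server index i < k a point; server i has weight beta^i.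
  Moving between configurations on the uniform metric costs the total weight of servers
  whose position changes.\<close>
definition move_cost :: "nat \<Rightarrow> nat \<Rightarrow> (nat \<Rightarrow> 'a) \<Rightarrow> (nat \<Rightarrow> 'a) \<Rightarrow> nat" where
  "move_cost \<beta> k c c' = (\<Sum>i<k. if c i \<noteq> c' i then \<beta> ^ i else 0)"

fun path_cost :: "nat \<Rightarrow> nat \<Rightarrow> (nat \<Rightarrow> 'a) \<Rightarrow> (nat \<Rightarrow> 'a) list \<Rightarrow> nat" where
  "path_cost \<beta> k c [] = 0"
| "path_cost \<beta> k c (c' # cs) = move_cost \<beta> k c c' + path_cost \<beta> k c' cs"

definition serves :: "nat \<Rightarrow> 'a list \<Rightarrow> (nat \<Rightarrow> 'a) list \<Rightarrow> bool" where
  "serves k reqs cs \<longleftrightarrow> length cs = length reqs \<and>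
     (\<forall>t < length reqs. \<exists>i < k. (cs ! t) i = reqs ! t)"

text \<open>Request sequences that can be generated by strategy(l,P), given the fixed set systems Q.\<close>
inductive strat :: "(nat \<Rightarrow> 'a set \<Rightarrow> 'a set set) \<Rightarrow> nat \<Rightarrow> nat \<Rightarrow> 'a set \<Rightarrow> 'a list \<Rightarrow> bool"
  for Q :: "nat \<Rightarrow> 'a set \<Rightarrow> 'a set set" and \<beta> :: nat where
  strat0: "P = {p} \<Longrightarrow> strat Q \<beta> 0 P [p]"
| stratS: "card P = nseq (Suc l) \<Longrightarrow>
           length xss = \<beta> * ((nseq l + 1) div 2 + 1) \<Longrightarrow>
           (\<forall>xs \<in> set xss. \<exists>P' \<in> Q (Suc l) P. strat Q \<beta> l P' xs) \<Longrightarrow>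
           strat Q \<beta> (Suc l) P (concat xss)"

definition admissible_Q :: "(nat \<Rightarrow> 'a set \<Rightarrow> 'a set set) \<Rightarrow> bool" where
  "admissible_Q Q \<longleftrightarrow> (\<forall>l \<ge> 1. \<forall>P. finite P \<and> card P = nseq l \<longrightarrow>
      Q l P \<subseteq> Pow P \<and>
      card (Q l P) = (nseq (l - 1) + 1) div 2 + 1 \<and>
      (\<forall>A \<in> Q l P. card A = nseq (l - 1)) \<and>
      (\<forall>p \<in> P. \<exists>A \<in> Q l P. p \<notin> A) \<and>
      (\<forall>p \<in> P. \<exists>q \<in> P. \<forall>A \<in> Q l P. p \<in> A \<or> q \<in> A))"

end

theory Submission
  imports Defs
begin

lemma move_cost_tri: "move_cost \<beta> k c a \<le> move_cost \<beta> k c b + move_cost \<beta> k b a"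
  unfolding move_cost_def sum.distrib[symmetric]
  by (rule sum_mono) auto

lemma path_cost_shift: "path_cost \<beta> k c cs \<le> move_cost \<beta> k c b + path_cost \<beta> k b cs"
proof (cases cs)
  case (Cons a r)
  then show ?thesis using move_cost_tri[of \<beta> k c a b] by simp
qed simp

lemma move_cost_upd:
  assumes "l < k" shows "move_cost \<beta> k c (c(l := q)) \<le> \<beta> ^ l"
proof -
  have "move_cost \<beta> k c (c(l := q)) \<le> (\<Sum>i<k. if i = l then \<beta> ^ l else 0)"
    unfolding move_cost_def by (rule sum_mono) auto
  also have "\<dots> = \<beta> ^ l" using assms by (simp add: sum.delta)
  finally show ?thesis .
qed

lemma path_cost_append:
  "path_cost \<beta> k c (cs1 @ cs2) = path_cost \<beta> k c cs1 + path_cost \<beta> k (last (c # cs1)) cs2"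
  by (induction cs1 arbitrary: c) auto

lemma serves_append:
  "serves k xs cs1 \<Longrightarrow> serves k ys cs2 \<Longrightarrow> serves k (xs @ ys) (cs1 @ cs2)"
  unfolding serves_def by (auto simp: nth_append)

lemma concat_serve:
  assumes "\<forall>xs\<in>set xss. \<forall>c. (\<forall>i\<ge>m. c i = d i) \<longrightarrow>
     (\<exists>cs. serves k xs cs \<and> path_cost \<beta> k c cs \<le> C \<and> (\<forall>c'\<in>set cs. \<forall>i\<ge>m. c' i = c i))"
  shows "\<forall>c. (\<forall>i\<ge>m. c i = d i) \<longrightarrow>
     (\<exists>cs. serves k (concat xss) cs \<and> path_cost \<beta> k c cs \<le> length xss * C
         \<and> (\<forall>c'\<in>set cs. \<forall>i\<ge>m. c' i = c i))"
  using assms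
proof (induction xss)
  case Nil
  then show ?case by (auto simp: serves_def)
next
  case (Cons xs xss)
  show ?case
  proof (intro allI impI)
    fix c assume c: "\<forall>i\<ge>m. c i = d i"
    from Cons.prems c obtain cs1 where cs1: "serves k xs cs1" "path_cost \<beta> k c cs1 \<le> C"
      "\<forall>c'\<in>set cs1. \<forall>i\<ge>m. c' i = c i" by auto
    have l: "\<forall>i\<ge>m. last (c # cs1) i = d i"
      using cs1(3) c by (cases cs1 rule: rev_cases) auto
    from Cons.IH Cons.prems l obtain cs2 where cs2: "serves k (concat xss) cs2"
      "path_cost \<beta> k (last (c # cs1)) cs2 \<le> length xss * C"
      "\<forall>c'\<in>set cs2. \<forall>i\<ge>m. c' i = last (c # cs1) i" by auto
    have "\<forall>i\<ge>m. last (c # cs1) i = c i" using l c by auto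
    then show "\<exists>cs. serves k (concat (xs # xss)) cs \<and>
       path_cost \<beta> k c cs \<le> length (xs # xss) * C \<and> (\<forall>c'\<in>set cs. \<forall>i\<ge>m. c' i = c i)"
      using cs1 cs2
      by (intro exI[of _ "cs1 @ cs2"]) (auto simp: serves_append path_cost_append)
  qed
qed

lemma main:
  assumes adm: "admissible_Q Q"
  shows "strat Q \<beta> l P reqs \<Longrightarrow> finite P \<Longrightarrow> l < k \<Longrightarrow>
    (\<exists>i. l \<le> i \<and> i < k \<and> c i \<in> P) \<Longrightarrow>
    (\<exists>cs. serves k reqs cs \<and> path_cost \<beta> k c cs \<le> cseq \<beta> l \<and>
         (\<forall>c'\<in>set cs. \<forall>i\<ge>l. c' i = c i))"
proof (induction arbitrary: c rule: strat.induct)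
  case (strat0 P p)
  then show ?case
    by (intro exI[of _ "[c]"]) (auto simp: serves_def move_cost_def)
next
  case (stratS P l xss)
  from stratS.prems obtain i0 where i0: "Suc l \<le> i0" "i0 < k" "c i0 \<in> P" by auto
  have lk: "l < k" using stratS.prems(2) by simp
  define p where "p = c i0"
  have Qp: "Q (Suc l) P \<subseteq> Pow P" "\<forall>A \<in> Q (Suc l) P. card A = nseq l"
    "\<forall>p \<in> P. \<exists>q \<in> P. \<forall>A \<in> Q (Suc l) P. p \<in> A \<or> q \<in> A"
    using adm[unfolded admissible_Q_def, rule_format, of "Suc l" P] stratS.hyps(1) stratS.prems(1)
    by simp_all
  obtain q where q: "\<forall>A \<in> Q (Suc l) P. p \<in> A \<or> q \<in> A"
    using Qp(3) i0(3) p_def by blast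
  define d where "d = c(l := q)"
  have sub: "\<forall>xs\<in>set xss. \<forall>c'. (\<forall>i\<ge>l. c' i = d i) \<longrightarrow>
     (\<exists>cs. serves k xs cs \<and> path_cost \<beta> k c' cs \<le> cseq \<beta> l \<and> (\<forall>c''\<in>set cs. \<forall>i\<ge>l. c'' i = c' i))"
  proof (intro ballI allI impI)
    fix xs c' assume xs: "xs \<in> set xss" and c': "\<forall>i\<ge>l. c' i = d i"
    from stratS.IH xs obtain P' where P': "P' \<in> Q (Suc l) P"
      and ih: "\<And>c. finite P' \<Longrightarrow> l < k \<Longrightarrow> (\<exists>i. l \<le> i \<and> i < k \<and> c i \<in> P') \<Longrightarrow>
        (\<exists>cs. serves k xs cs \<and> path_cost \<beta> k c cs \<le> cseq \<beta> l \<and> (\<forall>c'\<in>set cs. \<forall>i\<ge>l. c' i = c i))"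
      by blast
    have fin: "finite P'" using P' Qp(1) stratS.prems(1) finite_subset by blast
    have "c' l = q" "c' i0 = p" using c' i0 by (auto simp: d_def p_def)
    moreover have "p \<in> P' \<or> q \<in> P'" using q P' by blast
    ultimately have "\<exists>i. l \<le> i \<and> i < k \<and> c' i \<in> P'"
    proof (elim conjE disjE)
      assume "c' i0 = p" "p \<in> P'" then show ?thesis using i0 by (intro exI[of _ i0]) simp
    next
      assume "c' l = q" "q \<in> P'" then show ?thesis using lk by (intro exI[of _ l]) simp
    qed
    then show "\<exists>cs. serves k xs cs \<and> path_cost \<beta> k c' cs \<le> cseq \<beta> l \<and> (\<forall>c''\<in>set cs. \<forall>i\<ge>l. c'' i = c' i)"
      using ih[OF fin lk] by blast
  qed
  from concat_serve[OF sub] obtain cs where cs: "serves k (concat xss) cs"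
    "path_cost \<beta> k d cs \<le> length xss * cseq \<beta> l" "\<forall>c'\<in>set cs. \<forall>i\<ge>l. c' i = d i"
    by blast
  have "path_cost \<beta> k c cs \<le> move_cost \<beta> k c d + path_cost \<beta> k d cs"
    by (rule path_cost_shift)
  also have "\<dots> \<le> \<beta> ^ l + length xss * cseq \<beta> l"
    using move_cost_upd[OF lk, of \<beta> c q] cs(2) d_def by simp
  also have "\<dots> = cseq \<beta> (Suc l)" using stratS.hyps(2) by simp
  finally have cost: "path_cost \<beta> k c cs \<le> cseq \<beta> (Suc l)" .
  have "\<forall>c'\<in>set cs. \<forall>i\<ge>Suc l. c' i = c i" using cs(3) by (auto simp: d_def)
  then show ?case using cs(1) cost by blast
qed

theorem lemma6:
  fixes Q :: "nat \<Rightarrow> 'a set \<Rightarrow> 'a set set"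
    and k \<beta> l :: nat and P :: "'a set" and c0 :: "nat \<Rightarrow> 'a"
  assumes "admissible_Q Q"
    and "k \<ge> 1" and "\<beta> \<ge> 1" and "l \<le> k - 1"
    and "finite P" and "card P = nseq l"
    and "\<exists>i. l \<le> i \<and> i < k \<and> c0 i \<in> P"
  shows "\<forall>reqs. strat Q \<beta> l P reqs \<longrightarrow>
           (\<exists>cs. serves k reqs cs \<and> path_cost \<beta> k c0 cs \<le> cseq \<beta> l)"
proof -
  have "l < k" using assms(2,4) by simp
  then show ?thesis using main[OF assms(1)] assms(5,7) by blast
qed

end
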